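(* Let $\gamma>0$ or $\gamma<-1$, let $\theta\in\mathbb R^d$, and let $\mathcal X\subseteq\mathbb R^d$. For $x\in\mathcal X$, $y\in\{0,1\}$ define $$S_\gamma(x,y,\theta)=\Big[\frac{\exp\{(\gamma+1)y\,\theta^\top x\}}{1+\exp\{(\gamma+1)\theta^\top x\}}\Big]^{\frac{\gamma}{\gamma+1}}\Big\{y-\frac{\exp\{(\gamma+1)\theta^\top x\}}{1+\exp\{(\gamma+1)\theta^\top x\}}\Big\}x.$$ Let $Q$ be an arbitrary conditional distribution of $Y\in\{0,1\}$ given $X=x$, with conditional probability mass function $q(y|x)$ (not necessarily belonging to the logistic model). Then $$\sup_{x\in\mathcal X}\big|\theta^\top\,\mathbb E_Q[S_\gamma(X,Y,\theta)\mid X=x]\big|<\infty .$$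
   Context: $S_\gamma$ is the $\gamma$-estimating score for the binary logistic model $p(y|x,\theta)=\exp(y\theta^\top x)/(1+\exp(\theta^\top x))$, $y\in\{0,1\}$. $\mathbb E_Q[\cdot\mid X=x]=\sum_{y\in\{0,1\}}(\cdot)\,q(y|x)$. *)

theory Defs
  imports "HOL-Analysis.Analysis"
begin

definition S_gamma :: "real \<Rightarrow> real^'n \<Rightarrow> real \<Rightarrow> real^'n \<Rightarrow> real^'n" where
  "S_gamma \<gamma> x y \<theta> =
     ((exp ((\<gamma> + 1) * y * (\<theta> \<bullet> x)) / (1 + exp ((\<gamma> + 1) * (\<theta> \<bullet> x)))) powr (\<gamma> / (\<gamma> + 1)))
     *\<^sub>R ((y - exp ((\<gamma> + 1) * (\<theta> \<bullet> x)) / (1 + exp ((\<gamma> + 1) * (\<theta> \<bullet> x)))) *\<^sub>R x)"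

definition cond_exp_Q :: "(real^'n \<Rightarrow> real \<Rightarrow> real) \<Rightarrow> real \<Rightarrow> real^'n \<Rightarrow> real^'n \<Rightarrow> real^'n" where
  "cond_exp_Q q \<gamma> \<theta> x = (\<Sum>y\<in>{0::real, 1}. q x y *\<^sub>R S_gamma \<gamma> x y \<theta>)"

end

theory Submission
  imports Defs
begin

lemma keyL:
  fixes s \<alpha> :: real
  assumes "\<alpha> > 0"
  shows "\<bar>s\<bar> * (exp s / (1 + exp s)) * (1 / (1 + exp s)) powr \<alpha> \<le> max 1 (1/\<alpha>)"
proof (cases "s \<ge> 0")
  case True
  have ep: "1 + exp s > 0" using exp_gt_zero[of s] by linarith
  have u: "exp s / (1 + exp s) \<le> 1" by (simp only: pos_divide_le_eq[OF ep]) simp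
  have v: "1 / (1 + exp s) \<le> exp (-s)"
    unfolding exp_minus inverse_eq_divide using ep by (intro divide_left_mono) auto
  have "(1 / (1 + exp s)) powr \<alpha> \<le> exp (-s) powr \<alpha>"
    using v assms by (intro powr_mono2) auto
  also have "\<dots> = exp (- (\<alpha> * s))" by (simp add: powr_def)
  finally have vp: "(1 / (1 + exp s)) powr \<alpha> \<le> exp (- (\<alpha> * s))" .
  have "\<bar>s\<bar> * (exp s / (1 + exp s)) * (1 / (1 + exp s)) powr \<alpha> \<le> s * 1 * exp (- (\<alpha> * s))"
    using True u vp by (intro mult_mono) auto
  also have "\<dots> \<le> 1/\<alpha>"
  proof -
    have "exp (\<alpha> * s) \<ge> 1 + \<alpha> * s" by (rule exp_ge_add_one_self)
    hence "\<alpha> * s \<le> exp (\<alpha> * s)" by linarith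
    hence "\<alpha> * s * exp (- (\<alpha> * s)) \<le> 1" by (simp add: exp_minus field_simps)
    thus ?thesis using assms by (simp add: field_simps)
  qed
  finally show ?thesis by linarith
next
  case False
  have ep: "1 + exp s > 0" using exp_gt_zero[of s] by linarith
  have u: "exp s / (1 + exp s) \<le> exp s" by (simp only: pos_divide_le_eq[OF ep]) (simp add: algebra_simps)
  have v: "(1 / (1 + exp s)) powr \<alpha> \<le> 1"
    using assms ep by (intro powr_le1) auto
  have "\<bar>s\<bar> * (exp s / (1 + exp s)) * (1 / (1 + exp s)) powr \<alpha> \<le> (-s) * exp s * 1"
    using False u v by (intro mult_mono) (auto intro: mult_nonpos_nonneg)
  also have "\<dots> \<le> 1"
  proof -
    have "exp (-s) \<ge> 1 + (-s)" by (rule exp_ge_add_one_self)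
    hence "-s \<le> exp (-s)" by linarith
    thus ?thesis by (simp add: exp_minus field_simps)
  qed
  finally show ?thesis by linarith
qed

theorem mainTheorem7:
  fixes \<gamma> :: real and \<theta> :: "real^'n" and \<X> :: "(real^'n) set"
    and q :: "real^'n \<Rightarrow> real \<Rightarrow> real"
  assumes "\<gamma> > 0 \<or> \<gamma> < -1"
    and "\<And>x y. x \<in> \<X> \<Longrightarrow> y \<in> {0, 1} \<Longrightarrow> q x y \<ge> 0"
    and "\<And>x. x \<in> \<X> \<Longrightarrow> q x 0 + q x 1 = 1"
  shows "bdd_above ((\<lambda>x. \<bar>\<theta> \<bullet> cond_exp_Q q \<gamma> \<theta> x\<bar>) ` \<X>)"
proof -
  define a where "a = \<gamma> + 1"
  define \<alpha> where "\<alpha> = \<gamma> / a"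
  have a0: "a \<noteq> 0" using assms(1) by (auto simp: a_def)
  have al: "\<alpha> > 0" using assms(1) unfolding \<alpha>_def a_def by (auto simp: divide_pos_pos divide_neg_neg)
  define B where "B = max 1 (1/\<alpha>)"
  show ?thesis unfolding bdd_above_def
  proof (intro exI ballI)
    fix z assume "z \<in> (\<lambda>x. \<bar>\<theta> \<bullet> cond_exp_Q q \<gamma> \<theta> x\<bar>) ` \<X>"
    then obtain x where x: "x \<in> \<X>" and z: "z = \<bar>\<theta> \<bullet> cond_exp_Q q \<gamma> \<theta> x\<bar>" by auto
    define t where "t = \<theta> \<bullet> x"
    define s where "s = a * t"
    define u where "u = exp s / (1 + exp s)"
    define v where "v = 1 / (1 + exp s)"
    have ep: "1 + exp s > 0" using exp_gt_zero[of s] by linarith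
    have uv: "1 - u = v" using ep by (simp add: u_def v_def field_simps)
    have vu: "exp (-s) / (1 + exp (-s)) = v" "1 / (1 + exp (-s)) = u"
      by (simp_all add: u_def v_def exp_minus field_simps add_pos_pos)
    have t: "\<bar>t\<bar> = \<bar>s\<bar> / \<bar>a\<bar>" using a0 by (simp add: s_def abs_mult)
    have upos: "u \<ge> 0" "v \<ge> 0" by (simp_all add: u_def v_def add_pos_pos)
    have E0: "\<theta> \<bullet> S_gamma \<gamma> x 0 \<theta> = v powr \<alpha> * (- u) * t"
      unfolding S_gamma_def by (simp add: a_def[symmetric] \<alpha>_def[symmetric] t_def[symmetric]
        s_def[symmetric] u_def[symmetric] v_def[symmetric] inner_scaleR_right)
    have E1: "\<theta> \<bullet> S_gamma \<gamma> x 1 \<theta> = u powr \<alpha> * v * t"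
      unfolding S_gamma_def by (simp add: a_def[symmetric] \<alpha>_def[symmetric] t_def[symmetric]
        s_def[symmetric] u_def[symmetric] uv inner_scaleR_right)
    have b0: "\<bar>v powr \<alpha> * (- u) * t\<bar> \<le> B / \<bar>a\<bar>"
    proof -
      have "\<bar>s\<bar> * u * v powr \<alpha> \<le> B" using keyL[OF al, of s] by (simp add: u_def v_def B_def)
      hence "\<bar>s\<bar> * u * v powr \<alpha> / \<bar>a\<bar> \<le> B / \<bar>a\<bar>" by (simp add: divide_right_mono)
      thus ?thesis using upos t by (simp add: abs_mult field_simps)
    qed
    have b1: "\<bar>u powr \<alpha> * v * t\<bar> \<le> B / \<bar>a\<bar>"
    proof -
      have "\<bar>s\<bar> * v * u powr \<alpha> \<le> B" using keyL[OF al, of "-s"] by (simp add: vu B_def)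
      hence "\<bar>s\<bar> * v * u powr \<alpha> / \<bar>a\<bar> \<le> B / \<bar>a\<bar>" by (simp add: divide_right_mono)
      thus ?thesis using upos t by (simp add: abs_mult field_simps)
    qed
    have q0: "q x 0 \<ge> 0" "q x 1 \<ge> 0" using assms(2)[OF x] by auto
    have "z = \<bar>q x 0 * (\<theta> \<bullet> S_gamma \<gamma> x 0 \<theta>) + q x 1 * (\<theta> \<bullet> S_gamma \<gamma> x 1 \<theta>)\<bar>"
      unfolding z cond_exp_Q_def by (simp add: inner_add_right inner_scaleR_right)
    also have "\<dots> \<le> q x 0 * \<bar>\<theta> \<bullet> S_gamma \<gamma> x 0 \<theta>\<bar> + q x 1 * \<bar>\<theta> \<bullet> S_gamma \<gamma> x 1 \<theta>\<bar>"
      using q0 by (metis (no_types, lifting) abs_mult abs_of_nonneg abs_triangle_ineq)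
    also have "\<dots> \<le> q x 0 * (B / \<bar>a\<bar>) + q x 1 * (B / \<bar>a\<bar>)"
      unfolding E0 E1 using b0 b1 q0 by (intro add_mono mult_left_mono) auto
    also have "\<dots> = B / \<bar>a\<bar>" using assms(3)[OF x] by (metis distrib_right mult_1)
    finally show "z \<le> B / \<bar>a\<bar>" .
  qed
qed

end
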